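(* If $f\in E(S^1)$ satisfies $\operatorname{Lip}(f)<1$, then $f\in E^+(S^1)$. In particular, $E^+(S^1)$ is dense in $E(S^1)$ with respect to the sup norm.
   Context: $E(S^1)$ is the set of $1$-Lipschitz functions $f:\mathbb{R}\to\mathbb{R}$ (write $f_\alpha=f(\alpha)$) with $f_{\alpha+\pi}+f_\alpha=\pi$ for all $\alpha$, equipped with the sup norm. $S^1\subset E(S^1)$ is the set of functions $\alpha\mapsto\arccos(\cos(\alpha-\tau))$, $\tau\in\mathbb{R}$. Elements of $E(S^1)\setminus S^1$ take values in $(0,\pi)$. For such $f$ and $\beta-\alpha\notin\pi\mathbb{Z}$, \[ p_{\alpha,\beta}(f)=\frac{1-\cos(\beta-\alpha)^2-\cos(f_\alpha)^2-\cos(f_\beta)^2+2\cos(\beta-\alpha)\cos(f_\alpha)\cos(f_\beta)}{\sin(\beta-\alpha)^2\sin(f_\alpha)^2\sin(f_\beta)^2}. \] $E^+(S^1)$ denotes the set of $f\in E(S^1)\setminus S^1$ with $p_{\alpha,\beta}(f)>0$ for all $\alpha,\beta$ with $\alpha\ne\beta$ mod $\pi$. *)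

theory Defs
  imports "HOL-Analysis.Analysis"
begin

definition E_S1 :: "(real \<Rightarrow> real) set" where
  "E_S1 = {f. 1-lipschitz_on UNIV f \<and> (\<forall>\<alpha>. f (\<alpha> + pi) + f \<alpha> = pi)}"

definition S1 :: "(real \<Rightarrow> real) set" where
  "S1 = {f. \<exists>\<tau>::real. f = (\<lambda>\<alpha>. arccos (cos (\<alpha> - \<tau>)))}"

definition p_ab :: "real \<Rightarrow> real \<Rightarrow> (real \<Rightarrow> real) \<Rightarrow> real" where
  "p_ab \<alpha> \<beta> f =
     (1 - (cos (\<beta> - \<alpha>))^2 - (cos (f \<alpha>))^2 - (cos (f \<beta>))^2
        + 2 * cos (\<beta> - \<alpha>) * cos (f \<alpha>) * cos (f \<beta>))
     / ((sin (\<beta> - \<alpha>))^2 * (sin (f \<alpha>))^2 * (sin (f \<beta>))^2)"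

definition E_plus :: "(real \<Rightarrow> real) set" where
  "E_plus = {f \<in> E_S1 - S1. \<forall>\<alpha> \<beta>. (\<forall>k::int. \<beta> - \<alpha> \<noteq> of_int k * pi) \<longrightarrow> p_ab \<alpha> \<beta> f > 0}"

end

theory Submission
  imports Defs
begin

lemma per2:
  assumes h: "\<forall>\<alpha>. f (\<alpha> + pi) + f \<alpha> = (pi::real)"
  shows "f (t + of_int k * (2*pi)) = f t"
proof -
  have p: "f (s + 2*pi) = f s" for s
    using h[rule_format, of "s+pi"] h[rule_format, of s] by (simp add: add.assoc)
  have n: "f (s + real n * (2*pi)) = f s" for s n
  proof (induction n)
    case 0 then show ?case by simp
  next
    case (Suc n)
    have "f (s + real (Suc n) * (2*pi)) = f ((s + real n * (2*pi)) + 2*pi)"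
      by (simp add: algebra_simps)
    then show ?case using p Suc by simp
  qed
  show ?thesis
  proof (cases "k \<ge> 0")
    case True
    then show ?thesis using n[of t "nat k"] by simp
  next
    case False
    have "f ((t + of_int k * (2*pi)) + real (nat (-k)) * (2*pi)) = f (t + of_int k * (2*pi))"
      by (rule n)
    moreover have "(t + of_int k * (2*pi)) + real (nat (-k)) * (2*pi) = t"
      using False by (simp add: algebra_simps)
    ultimately show ?thesis by simp
  qed
qed

lemma key:
  assumes C: "C < 1" and L: "C-lipschitz_on UNIV f"
    and h: "\<forall>\<alpha>. f (\<alpha> + pi) + f \<alpha> = (pi::real)"
    and d: "\<forall>k::int. d \<noteq> of_int k * pi"
  shows "cos (f (a + d) - f a) > cos d"
proof -
  define k where "k = \<lfloor>d / (2*pi) + 1/2\<rfloor>"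
  define d' where "d' = d - of_int k * (2*pi)"
  have k1: "of_int k \<le> d / (2*pi) + 1/2" "d / (2*pi) + 1/2 < of_int k + 1"
    unfolding k_def by linarith+
  have "of_int k * (2*pi) \<le> d + pi" using k1(1) pi_gt_zero
    by (simp add: field_simps)
  hence d1: "d' \<ge> -pi" unfolding d'_def by simp
  have "d + pi < (of_int k + 1) * (2*pi)" using k1(2) pi_gt_zero
    by (simp add: field_simps)
  hence d2: "d' < pi" unfolding d'_def by (simp add: algebra_simps)
  have d3: "d' \<noteq> -pi"
  proof
    assume "d' = -pi"
    hence "d = of_int (2*k-1) * pi" unfolding d'_def by (simp add: algebra_simps)
    with d show False by blast
  qed
  have d4: "d' \<noteq> 0"
  proof
    assume "d' = 0"
    hence "d = of_int (2*k) * pi" unfolding d'_def by (simp add: algebra_simps)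
    with d show False by blast
  qed
  have fe: "f (a + d) = f (a + d')"
    using per2[OF h, of "a + d'" k] unfolding d'_def by (simp add: algebra_simps)
  have cd: "cos d = cos d'"
    using cos.plus_of_int[of d' k] unfolding d'_def by simp
  have cd2: "cos d' = cos \<bar>d'\<bar>" by (rule cos_abs_real[symmetric])
  have "dist (f (a + d')) (f a) \<le> C * dist (a + d') a"
    using L unfolding lipschitz_on_def by blast
  hence u: "\<bar>f (a + d') - f a\<bar> \<le> C * \<bar>d'\<bar>" by (simp add: dist_real_def)
  have C0: "C \<ge> 0" using L lipschitz_on_nonneg by blast
  have ad: "\<bar>d'\<bar> > 0" "\<bar>d'\<bar> < pi" using d1 d2 d3 d4 by auto
  have "C * \<bar>d'\<bar> < \<bar>d'\<bar>" using C ad by simp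
  with u have ul: "\<bar>f (a + d') - f a\<bar> < \<bar>d'\<bar>" by linarith
  have "cos \<bar>d'\<bar> < cos \<bar>f (a + d') - f a\<bar>"
    by (rule cos_monotone_0_pi) (use ul ad in auto)
  moreover have "cos (f (a + d') - f a) = cos \<bar>f (a + d') - f a\<bar>"
    by (rule cos_abs_real[symmetric])
  ultimately have "cos d' < cos (f (a + d') - f a)" using cd2 by linarith
  then show ?thesis using fe cd by simp
qed

lemma range01:
  assumes C: "C < 1" and L: "C-lipschitz_on UNIV f"
    and h: "\<forall>\<alpha>. f (\<alpha> + pi) + f \<alpha> = (pi::real)"
  shows "f a > 0 \<and> f a < pi"
proof -
  have "dist (f (a + pi)) (f a) \<le> C * dist (a + pi) a"
    using L unfolding lipschitz_on_def by blast
  hence "\<bar>f (a + pi) - f a\<bar> \<le> C * pi" by (simp add: dist_real_def)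
  moreover have "C * pi < pi" using C by simp
  moreover have "f (a + pi) = pi - f a" using h[rule_format, of a] by linarith
  moreover have "\<bar>f (a + pi) - f a\<bar> = \<bar>pi - 2 * f a\<bar>"
    using h[rule_format, of a] by (simp add: algebra_simps)
  ultimately have "\<bar>pi - 2 * f a\<bar> < pi" by linarith
  then show ?thesis by (simp add: abs_less_iff)
qed

lemma part1:
  assumes fE: "f \<in> E_S1" and C: "C < 1" and L: "C-lipschitz_on UNIV f"
  shows "f \<in> E_plus"
proof -
  have h: "\<forall>\<alpha>. f (\<alpha> + pi) + f \<alpha> = pi" using fE unfolding E_S1_def by blast
  have r: "f a > 0 \<and> f a < pi" for a using range01[OF C L h] .
  have nS: "f \<notin> S1"
  proof
    assume "f \<in> S1"
    then obtain \<tau> where "f = (\<lambda>\<alpha>. arccos (cos (\<alpha> - \<tau>)))" unfolding S1_def by blast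
    hence "f \<tau> = 0" by simp
    with r[of \<tau>] show False by simp
  qed
  have pos: "p_ab \<alpha> \<beta> f > 0" if d: "\<forall>k::int. \<beta> - \<alpha> \<noteq> of_int k * pi" for \<alpha> \<beta>
  proof -
    define x where "x = f \<alpha>"
    define y where "y = f \<beta>"
    define c where "c = cos (\<beta> - \<alpha>)"
    have k1: "cos (f (\<alpha> + (\<beta> - \<alpha>)) - f \<alpha>) > cos (\<beta> - \<alpha>)"
      by (rule key[OF C L h d])
    have d': "\<forall>k::int. \<beta> - \<alpha> + pi \<noteq> of_int k * pi"
    proof
      fix k :: int
      show "\<beta> - \<alpha> + pi \<noteq> of_int k * pi"
      proof
        assume "\<beta> - \<alpha> + pi = of_int k * pi"
        hence "\<beta> - \<alpha> = of_int (k - 1) * pi" by (simp add: algebra_simps)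
        with d show False by blast
      qed
    qed
    have k2: "cos (f (\<alpha> + (\<beta> - \<alpha> + pi)) - f \<alpha>) > cos (\<beta> - \<alpha> + pi)"
      by (rule key[OF C L h d'])
    have yb: "f (\<beta> + pi) = pi - y" unfolding y_def using h[rule_format, of \<beta>] by linarith
    have "\<alpha> + (\<beta> - \<alpha> + pi) = \<beta> + pi" by simp
    hence "cos (pi - y - x) > - c" using k2 yb unfolding c_def x_def by simp
    hence "cos (x + y) < c" by (simp add: cos_diff algebra_simps)
    hence A: "cos x * cos y - sin x * sin y < c" by (simp add: cos_add)
    have "cos (y - x) > c" using k1 unfolding c_def x_def y_def by simp
    hence B: "c < cos x * cos y + sin x * sin y" by (simp add: cos_diff algebra_simps)
    have sx: "sin x > 0" using r[of \<alpha>] unfolding x_def by (simp add: sin_gt_zero)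
    have sy: "sin y > 0" using r[of \<beta>] unfolding y_def by (simp add: sin_gt_zero)
    have "\<bar>c - cos x * cos y\<bar> < sin x * sin y" using A B by linarith
    hence "(c - cos x * cos y)^2 < (sin x * sin y)^2"
      by (metis abs_ge_zero abs_power2 order_le_less_trans power2_abs power_strict_mono zero_less_numeral)
    hence "(sin x * sin y)^2 - (c - cos x * cos y)^2 > 0" by simp
    moreover have "(sin x * sin y)^2 - (c - cos x * cos y)^2
      = 1 - c^2 - (cos x)^2 - (cos y)^2 + 2 * c * cos x * cos y"
    proof -
      have "(sin x * sin y)^2 = (1 - (cos x)^2) * (1 - (cos y)^2)"
        by (simp add: power_mult_distrib sin_squared_eq)
      then show ?thesis by (simp add: power2_eq_square algebra_simps)
    qed
    ultimately have num: "1 - c^2 - (cos x)^2 - (cos y)^2 + 2 * c * cos x * cos y > 0" by simp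
    have "sin (\<beta> - \<alpha>) \<noteq> 0"
    proof
      assume "sin (\<beta> - \<alpha>) = 0"
      then obtain n :: int where "\<beta> - \<alpha> = of_int n * pi" using sin_zero_iff_int2 by blast
      with d show False by blast
    qed
    hence den: "(sin (\<beta> - \<alpha>))^2 * (sin x)^2 * (sin y)^2 > 0" using sx sy by simp
    show ?thesis unfolding p_ab_def using num den unfolding c_def x_def y_def
      by (simp add: mult.assoc)
  qed
  show ?thesis unfolding E_plus_def using fE nS pos by blast
qed

theorem lemma3p3:
  shows "(\<forall>f \<in> E_S1. (\<exists>C < 1. C-lipschitz_on UNIV f) \<longrightarrow> f \<in> E_plus)
    \<and> (\<forall>f \<in> E_S1. \<forall>\<epsilon> > 0. \<exists>g \<in> E_plus. (SUP x. \<bar>f x - g x\<bar>) < \<epsilon>)"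
proof (intro conjI ballI allI impI)
  fix f assume "f \<in> E_S1" "\<exists>C < 1. C-lipschitz_on UNIV f"
  then show "f \<in> E_plus" using part1 by blast
next
  fix f and \<epsilon> :: real assume fE: "f \<in> E_S1" and e: "\<epsilon> > 0"
  have h: "\<forall>\<alpha>. f (\<alpha> + pi) + f \<alpha> = pi" and L1: "1-lipschitz_on UNIV f"
    using fE unfolding E_S1_def by blast+
  define s where "s = min (1/2) (\<epsilon> / pi)"
  have s0: "s > 0" "s \<le> 1/2" "s \<le> \<epsilon> / pi" unfolding s_def
    using e apply simp
    apply (rule min.cobounded1)
    apply (rule min.cobounded2)
    done
  define t where "t = 1 - s"
  define g where "g = (\<lambda>x. pi/2 + t * (f x - pi/2))"
  have t0: "t > 0" "t < 1" unfolding t_def using s0 by linarith+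
  have Lg: "t-lipschitz_on UNIV g"
  proof (rule lipschitz_onI)
    fix x y :: real
    have "dist (f x) (f y) \<le> 1 * dist x y" using L1 unfolding lipschitz_on_def by blast
    hence "\<bar>f x - f y\<bar> \<le> \<bar>x - y\<bar>" by (simp add: dist_real_def)
    hence "t * \<bar>f x - f y\<bar> \<le> t * \<bar>x - y\<bar>" using t0 by (simp add: mult_left_mono)
    moreover have "\<bar>g x - g y\<bar> = t * \<bar>f x - f y\<bar>"
    proof -
      have "g x - g y = t * (f x - f y)" unfolding g_def by (simp add: algebra_simps)
      then show ?thesis using t0 by (simp add: abs_mult)
    qed
    ultimately show "dist (g x) (g y) \<le> t * dist x y" by (simp add: dist_real_def)
  qed (use t0 in simp)
  have hg: "\<forall>\<alpha>. g (\<alpha> + pi) + g \<alpha> = pi"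
  proof
    fix \<alpha>
    have "g (\<alpha> + pi) + g \<alpha> = pi + t * (f (\<alpha> + pi) + f \<alpha> - pi)" unfolding g_def
      by (simp add: algebra_simps)
    then show "g (\<alpha> + pi) + g \<alpha> = pi" using h by simp
  qed
  have gE: "g \<in> E_S1" unfolding E_S1_def
    using lipschitz_on_le[OF Lg] t0 hg by auto
  have gP: "g \<in> E_plus" using part1[OF gE t0(2) Lg] .
  have bd: "\<bar>f x - g x\<bar> \<le> \<epsilon> / 2" for x
  proof -
    have "dist (f (x + pi)) (f x) \<le> 1 * dist (x + pi) x"
      using L1 unfolding lipschitz_on_def by blast
    hence "\<bar>f (x + pi) - f x\<bar> \<le> pi" by (simp add: dist_real_def)
    moreover have "f (x + pi) = pi - f x" using h[rule_format, of x] by linarith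
    ultimately have "\<bar>pi - 2 * f x\<bar> \<le> pi" by simp
    then have fb: "\<bar>f x - pi/2\<bar> \<le> pi/2" unfolding abs_le_iff by linarith
    have "\<bar>f x - g x\<bar> = s * \<bar>f x - pi/2\<bar>"
    proof -
      have "f x - g x = s * (f x - pi/2)" unfolding g_def t_def by (simp add: field_simps)
      then show ?thesis using s0 by (simp add: abs_mult)
    qed
    also have "\<dots> \<le> s * (pi/2)" using fb s0 by (simp add: mult_left_mono)
    also have "\<dots> \<le> (\<epsilon> / pi) * (pi/2)" using s0 by (intro mult_right_mono) auto
    also have "\<dots> = \<epsilon> / 2" by simp
    finally show ?thesis .
  qed
  have "(SUP x. \<bar>f x - g x\<bar>) \<le> \<epsilon> / 2"
    by (rule cSUP_least) (use bd in auto)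
  also have "\<dots> < \<epsilon>" using e by simp
  finally show "\<exists>g \<in> E_plus. (SUP x. \<bar>f x - g x\<bar>) < \<epsilon>" using gP by blast
qed

end
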